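(* Let $E\subseteq\mathrm{Lim}(\omega_1)$ be stationary and let $S=(x_\gamma)_{\gamma\in E}$ be a $\clubsuit(E)$-sequence. Let $\kappa$ be any cardinal and $P=\Pi^*_{\kappa}\mathrm{Fn}(\omega,2)$. Then $P$ forces that $S$ is a $\clubsuit(E)$-sequence.
   Context: $\mathrm{Lim}(\omega_1)$ is the set of countable limit ordinals. A $\clubsuit(E)$-sequence is $(x_\gamma)_{\gamma\in E}$ with each $x_\gamma$ a cofinal subset of $\gamma$ of order type $\omega$ such that for every $y\in[\omega_1]^{\aleph_1}$ there is $\gamma\in E$ with $x_\gamma\subseteq y$. $\mathrm{Fn}(\omega,2)$ is the set of finite partial functions from $\omega$ to $2$ ordered by reverse inclusion. $\Pi^*_{\kappa}\mathrm{Fn}(\omega,2)$ is the set of functions $p:\kappa\to\mathrm{Fn}(\omega,2)$ with $\mathrm{supp}(p)=\{i:p(i)\neq\emptyset\}$ countable, ordered by $p\leq q$ iff $p(i)\supseteq q(i)$ for all $i<\kappa$ and $\{i : p(i)\supsetneq q(i)\supsetneq\emptyset\}$ is finite. *)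

theory Defs
  imports "HOL-Library.Countable_Set"
begin

(* omega_1 is modelled by a wellorder type 'w all of whose proper initial
   segments are countable while the whole type is uncountable; this
   characterises omega_1 up to order isomorphism. *)
definition is_omega1 :: "'w::wellorder itself \<Rightarrow> bool" where
  "is_omega1 _ \<longleftrightarrow> uncountable (UNIV :: 'w set) \<and> (\<forall>x::'w. countable {..<x})"

definition is_limit :: "'w::wellorder \<Rightarrow> bool" where
  "is_limit \<gamma> \<longleftrightarrow> (\<exists>\<beta>. \<beta> < \<gamma>) \<and> (\<forall>\<beta><\<gamma>. \<exists>\<delta>. \<beta> < \<delta> \<and> \<delta> < \<gamma>)"

definition club :: "'w::wellorder set \<Rightarrow> bool" where
  "club C \<longleftrightarrow> (\<forall>\<beta>. \<exists>\<delta>\<in>C. \<beta> < \<delta>) \<and>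
     (\<forall>\<gamma>. is_limit \<gamma> \<and> (\<forall>\<beta><\<gamma>. \<exists>\<delta>\<in>C. \<beta> < \<delta> \<and> \<delta> < \<gamma>) \<longrightarrow> \<gamma> \<in> C)"

definition stationary :: "'w::wellorder set \<Rightarrow> bool" where
  "stationary E \<longleftrightarrow> (\<forall>C. club C \<longrightarrow> E \<inter> C \<noteq> {})"

(* x is a cofinal subset of gamma of order type omega *)
definition ladder :: "'w::wellorder \<Rightarrow> 'w set \<Rightarrow> bool" where
  "ladder \<gamma> x \<longleftrightarrow> x \<subseteq> {..<\<gamma>} \<and> (\<forall>\<beta><\<gamma>. \<exists>\<delta>\<in>x. \<beta> \<le> \<delta>) \<and>
     infinite x \<and> (\<forall>\<beta>\<in>x. finite {\<delta>\<in>x. \<delta> < \<beta>})"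

definition clubsuit_seq :: "'w::wellorder set \<Rightarrow> ('w \<Rightarrow> 'w set) \<Rightarrow> bool" where
  "clubsuit_seq E x \<longleftrightarrow> (\<forall>\<gamma>\<in>E. is_limit \<gamma> \<and> ladder \<gamma> (x \<gamma>)) \<and>
     (\<forall>y. uncountable y \<longrightarrow> (\<exists>\<gamma>\<in>E. x \<gamma> \<subseteq> y))"

definition Fn :: "(nat \<rightharpoonup> bool) set" where
  "Fn = {f. finite (dom f)}"

(* Pi^*_kappa Fn(omega,2), kappa represented by an index set K *)
definition PiStar :: "'k set \<Rightarrow> ('k \<Rightarrow> (nat \<rightharpoonup> bool)) set" where
  "PiStar K = {p. (\<forall>i. p i \<in> Fn) \<and> (\<forall>i. i \<notin> K \<longrightarrow> p i = Map.empty)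
                  \<and> countable {i. p i \<noteq> Map.empty}}"

definition pleq :: "('k \<Rightarrow> (nat \<rightharpoonup> bool)) \<Rightarrow> ('k \<Rightarrow> (nat \<rightharpoonup> bool)) \<Rightarrow> bool" where
  "pleq p q \<longleftrightarrow> (\<forall>i. q i \<subseteq>\<^sub>m p i) \<and>
     finite {i. p i \<noteq> q i \<and> q i \<noteq> Map.empty}"

(* Nice names for subsets of omega_1 (ground model): A : 'w => set of conditions,
   meaning {(alpha-check, a) | a \<in> A alpha}. *)

(* q forces  alpha-check \<in> y-dot,  where A = A alpha (A predense below q) *)
definition forces_mem :: "'c set \<Rightarrow> ('c \<Rightarrow> 'c \<Rightarrow> bool) \<Rightarrow> 'c \<Rightarrow> 'c set \<Rightarrow> bool" where
  "forces_mem P le q A \<longleftrightarrow>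
     (\<forall>r\<in>P. le r q \<longrightarrow> (\<exists>s\<in>P. le s r \<and> (\<exists>a\<in>A. le s a)))"

definition forces_unbounded ::
  "'c set \<Rightarrow> ('c \<Rightarrow> 'c \<Rightarrow> bool) \<Rightarrow> 'c \<Rightarrow> ('w::wellorder \<Rightarrow> 'c set) \<Rightarrow> bool" where
  "forces_unbounded P le p A \<longleftrightarrow>
     (\<forall>\<beta>. \<forall>q\<in>P. le q p \<longrightarrow> (\<exists>r\<in>P. le r q \<and> (\<exists>\<alpha>. \<beta> < \<alpha> \<and> (\<exists>a\<in>A \<alpha>. le r a))))"

definition forces_clubsuit_guess ::
  "'c set \<Rightarrow> ('c \<Rightarrow> 'c \<Rightarrow> bool) \<Rightarrow> 'w::wellorder set \<Rightarrow> ('w \<Rightarrow> 'w set) \<Rightarrow> bool" where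
  "forces_clubsuit_guess P le E x \<longleftrightarrow>
     (\<forall>p\<in>P. \<forall>A. (\<forall>\<alpha>. A \<alpha> \<subseteq> P) \<and> forces_unbounded P le p A \<longrightarrow>
        (\<exists>q\<in>P. le q p \<and> (\<exists>\<gamma>\<in>E. \<forall>n\<in>x \<gamma>. forces_mem P le q (A n))))"

end

theory Submission
  imports Defs
begin


lemma count_fs:
  assumes "countable C" "countable W"
  shows "countable {t::'k \<Rightarrow> 'v. finite {i. t i \<noteq> z} \<and> {i. t i \<noteq> z} \<subseteq> C \<and> (\<forall>i. t i \<in> W)}"
    (is "countable ?T")
proof -
  define G where "G t = (\<lambda>i. (i, t i)) ` {i. t i \<noteq> z}" for t :: "'k \<Rightarrow> 'v"
  have "G ` ?T \<subseteq> {S. finite S \<and> S \<subseteq> C \<times> W}" unfolding G_def by auto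
  moreover have "countable {S. finite S \<and> S \<subseteq> C \<times> W}"
    by (rule countable_Collect_finite_subset) (use assms in auto)
  ultimately have "countable (G ` ?T)" by (rule countable_subset)
  moreover have "inj_on G ?T"
  proof (rule inj_onI)
    fix t1 t2 assume "G t1 = G t2"
    then have "\<forall>i. t1 i = t2 i" unfolding G_def by (auto simp: set_eq_iff image_iff) (metis+)
    then show "t1 = t2" by auto
  qed
  ultimately show ?thesis by (rule countable_image_inj_on)
qed

lemma countable_Fn: "countable Fn"
proof -
  have "Fn \<subseteq> {t::nat \<Rightarrow> bool option. finite {i. t i \<noteq> None} \<and> {i. t i \<noteq> None} \<subseteq> UNIV \<and> (\<forall>i. t i \<in> UNIV)}"
    unfolding Fn_def dom_def by auto
  moreover have "countable (UNIV :: bool option set)" by simp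
  ultimately show ?thesis using count_fs[of "UNIV::nat set" "UNIV :: bool option set" None]
    using countable_subset by blast
qed

lemma pleq_refl: "pleq p p" unfolding pleq_def by auto

lemma pleq_trans: assumes "pleq a b" "pleq b c" shows "pleq a c"
proof -
  have "{i. a i \<noteq> c i \<and> c i \<noteq> Map.empty} \<subseteq> {i. a i \<noteq> b i \<and> b i \<noteq> Map.empty} \<union> {i. b i \<noteq> c i \<and> c i \<noteq> Map.empty}"
    by auto
  then show ?thesis using assms unfolding pleq_def by (meson finite_Un finite_subset map_le_trans)
qed

lemma pleqI: assumes "\<And>i. b i = Map.empty \<or> a i = b i" shows "pleq a b"
proof -
  have e: "{i. a i \<noteq> b i \<and> b i \<noteq> Map.empty} = {}" using assms by blast
  have "\<forall>i. b i \<subseteq>\<^sub>m a i" using assms by (metis map_le_empty map_le_refl)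
  then show ?thesis unfolding pleq_def e by simp
qed

lemma om_bounded:
  fixes Y :: "'w::wellorder set"
  assumes "is_omega1 TYPE('w)" "countable Y"
  shows "\<exists>b. \<forall>y\<in>Y. y < b"
proof -
  have c: "countable {..y}" for y :: 'w
  proof -
    have "{..y} = insert y {..<y}" by auto
    then show ?thesis using assms(1) unfolding is_omega1_def by simp
  qed
  have "countable (\<Union>y\<in>Y. {..y})" using assms(2) c by blast
  moreover have "uncountable (UNIV :: 'w set)" using assms(1) unfolding is_omega1_def by simp
  ultimately obtain b where "b \<notin> (\<Union>y\<in>Y. {..y})" by (metis UNIV_eq_I)
  then show ?thesis by (auto simp: not_le)
qed




locale cs =
  fixes K :: "'k set" and p :: "'k \<Rightarrow> nat \<rightharpoonup> bool" and A :: "'w::wellorder \<Rightarrow> ('k \<Rightarrow> nat \<rightharpoonup> bool) set"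
  assumes om: "is_omega1 TYPE('w)" and pP: "p \<in> PiStar K" and AP: "\<forall>\<alpha>. A \<alpha> \<subseteq> PiStar K"
    and unb: "forces_unbounded (PiStar K) pleq p A"
begin

definition ppg :: "('w \<Rightarrow> 'k \<Rightarrow> nat \<rightharpoonup> bool) \<Rightarrow> 'w \<Rightarrow> 'k \<Rightarrow> nat \<rightharpoonup> bool" where
 "ppg g \<xi> = (\<lambda>i. if p i \<noteq> Map.empty then p i else if \<exists>\<eta><\<xi>. g \<eta> i \<noteq> Map.empty
     then g (LEAST \<eta>. \<eta> < \<xi> \<and> g \<eta> i \<noteq> Map.empty) i else Map.empty)"

definition H where "H g \<xi> = (SOME r. r \<in> PiStar K \<and> pleq r (ppg g \<xi>) \<and> (\<exists>\<alpha>. \<xi> < \<alpha> \<and> (\<exists>a\<in>A \<alpha>. pleq r a)))"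
definition rr where "rr = wfrec {(x,y). x<y} H"
definition pp where "pp \<xi> = ppg rr \<xi>"

lemma ppg_cut: "ppg (cut g {(x,y). x<y} \<xi>) \<xi> = ppg g \<xi>"
proof (rule ext)
  fix i
  have eq: "(\<lambda>\<eta>. \<eta> < \<xi> \<and> cut g {(x,y). x<y} \<xi> \<eta> i \<noteq> Map.empty) = (\<lambda>\<eta>. \<eta> < \<xi> \<and> g \<eta> i \<noteq> Map.empty)"
    by (auto simp: cut_def)
  show "ppg (cut g {(x,y). x<y} \<xi>) \<xi> i = ppg g \<xi> i"
  proof (cases "\<exists>\<eta><\<xi>. g \<eta> i \<noteq> Map.empty")
    case True
    then have "(LEAST \<eta>. \<eta> < \<xi> \<and> g \<eta> i \<noteq> Map.empty) < \<xi>"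
      by (metis (mono_tags, lifting) LeastI_ex)
    then show ?thesis unfolding ppg_def eq by (auto simp: cut_def)
  next
    case False
    then show ?thesis unfolding ppg_def by (auto simp: cut_def)
  qed
qed

lemma rr_eq: "rr \<xi> = H rr \<xi>"
  unfolding rr_def by (subst wfrec[OF wf]) (simp add: H_def ppg_cut)

lemma pp_alt: "pp \<xi> i = (if p i \<noteq> Map.empty then p i else if \<exists>\<eta><\<xi>. rr \<eta> i \<noteq> Map.empty
     then rr (LEAST \<eta>. rr \<eta> i \<noteq> Map.empty) i else Map.empty)"
proof (cases "\<exists>\<eta><\<xi>. rr \<eta> i \<noteq> Map.empty")
  case True
  then obtain \<eta>0 where h: "\<eta>0 < \<xi>" "rr \<eta>0 i \<noteq> Map.empty" by auto
  have "(LEAST \<eta>. \<eta> < \<xi> \<and> rr \<eta> i \<noteq> Map.empty) = (LEAST \<eta>. rr \<eta> i \<noteq> Map.empty)"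
  proof (rule Least_equality)
    have "(LEAST \<eta>. rr \<eta> i \<noteq> Map.empty) \<le> \<eta>0" using h by (rule_tac Least_le) 
    then show "(LEAST \<eta>. rr \<eta> i \<noteq> Map.empty) < \<xi> \<and> rr (LEAST \<eta>. rr \<eta> i \<noteq> Map.empty) i \<noteq> Map.empty"
      using h by (metis (mono_tags, lifting) LeastI order_le_less_trans)
  next
    fix y assume "y < \<xi> \<and> rr y i \<noteq> Map.empty"
    then show "(LEAST \<eta>. rr \<eta> i \<noteq> Map.empty) \<le> y" by (simp add: Least_le)
  qed
  then show ?thesis using True unfolding pp_def ppg_def by auto
next
  case False
  then show ?thesis unfolding pp_def ppg_def by auto
qed

lemma least_ne: "rr \<eta> i \<noteq> Map.empty \<Longrightarrow> rr (LEAST \<eta>. rr \<eta> i \<noteq> Map.empty) i \<noteq> Map.empty"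
  by (rule LeastI)

lemma pp_cases: "pp \<xi> i = Map.empty \<or> pp \<xi> i = p i \<or> (\<exists>\<eta><\<xi>. pp \<xi> i = rr \<eta> i)"
proof (cases "\<exists>\<eta><\<xi>. rr \<eta> i \<noteq> Map.empty")
  case True
  then have "(LEAST \<eta>. \<eta> < \<xi> \<and> rr \<eta> i \<noteq> Map.empty) < \<xi>"
    by (metis (mono_tags, lifting) LeastI_ex)
  then show ?thesis unfolding pp_def ppg_def by auto
next
  case False
  then show ?thesis unfolding pp_def ppg_def by auto
qed

lemma pp_mono: "\<eta> \<le> \<xi> \<Longrightarrow> pp \<eta> i \<noteq> Map.empty \<Longrightarrow> pp \<xi> i = pp \<eta> i"
  unfolding pp_alt[of \<xi>] pp_alt[of \<eta>] by (auto intro: order_less_le_trans split: if_splits)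

lemma pp_new: assumes "rr \<xi> i \<noteq> Map.empty" "pp \<xi> i = Map.empty" "\<xi> < \<delta>"
  shows "pp \<delta> i = rr \<xi> i"
proof -
  have p0: "p i = Map.empty"
    using assms(2) unfolding pp_alt[of \<xi>] by (auto split: if_splits)
  have n: "\<not> (\<exists>\<eta><\<xi>. rr \<eta> i \<noteq> Map.empty)"
  proof
    assume h: "\<exists>\<eta><\<xi>. rr \<eta> i \<noteq> Map.empty"
    then obtain \<eta> where "rr \<eta> i \<noteq> Map.empty" by blast
    then have "rr (LEAST \<eta>. rr \<eta> i \<noteq> Map.empty) i \<noteq> Map.empty" by (rule least_ne)
    then show False using assms(2) h p0 unfolding pp_alt[of \<xi>] by simp
  qed
  have "(LEAST \<eta>. rr \<eta> i \<noteq> Map.empty) = \<xi>"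
    by (rule Least_equality) (use assms(1) n in \<open>auto simp: not_less[symmetric]\<close>)
  then show ?thesis unfolding pp_alt[of \<delta>] using p0 assms by auto
qed

lemma countable_below: "countable {..<\<xi>::'w}"
  using om unfolding is_omega1_def by simp

lemma pp_P: assumes "\<forall>\<eta><\<xi>. rr \<eta> \<in> PiStar K" shows "pp \<xi> \<in> PiStar K"
proof -
  have sub: "{i. pp \<xi> i \<noteq> Map.empty} \<subseteq> {i. p i \<noteq> Map.empty} \<union> (\<Union>\<eta>\<in>{..<\<xi>}. {i. rr \<eta> i \<noteq> Map.empty})"
    using pp_cases[of \<xi>] by fastforce
  have "countable ({i. p i \<noteq> Map.empty} \<union> (\<Union>\<eta>\<in>{..<\<xi>}. {i. rr \<eta> i \<noteq> Map.empty}))"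
    using pP assms countable_below unfolding PiStar_def by auto
  then have c: "countable {i. pp \<xi> i \<noteq> Map.empty}" using sub countable_subset by blast
  have "pp \<xi> i \<in> Fn" for i
    using pp_cases[of \<xi> i] pP assms unfolding PiStar_def Fn_def by auto
  moreover have "i \<notin> K \<Longrightarrow> pp \<xi> i = Map.empty" for i
    using pp_cases[of \<xi> i] pP assms unfolding PiStar_def by auto
  ultimately show ?thesis using c unfolding PiStar_def by auto
qed

lemma pp_le_p: "pleq (pp \<xi>) p"
  by (rule pleqI) (simp add: pp_alt)

lemma inv: "rr \<xi> \<in> PiStar K \<and> pleq (rr \<xi>) (pp \<xi>) \<and> (\<exists>\<alpha>. \<xi> < \<alpha> \<and> (\<exists>a\<in>A \<alpha>. pleq (rr \<xi>) a))"
proof (induction \<xi> rule: less_induct)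
  case (less \<xi>)
  then have P: "pp \<xi> \<in> PiStar K" by (intro pp_P) auto
  have "\<exists>r. r \<in> PiStar K \<and> pleq r (ppg rr \<xi>) \<and> (\<exists>\<alpha>. \<xi> < \<alpha> \<and> (\<exists>a\<in>A \<alpha>. pleq r a))"
    using unb P pp_le_p unfolding forces_unbounded_def pp_def by blast
  then have "H rr \<xi> \<in> PiStar K \<and> pleq (H rr \<xi>) (ppg rr \<xi>) \<and> (\<exists>\<alpha>. \<xi> < \<alpha> \<and> (\<exists>a\<in>A \<alpha>. pleq (H rr \<xi>) a))"
    unfolding H_def by (rule someI_ex)
  then have "rr \<xi> \<in> PiStar K \<and> pleq (rr \<xi>) (ppg rr \<xi>) \<and> (\<exists>\<alpha>. \<xi> < \<alpha> \<and> (\<exists>a\<in>A \<alpha>. pleq (rr \<xi>) a))"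
    using rr_eq[of \<xi>] by simp
  then show ?case unfolding pp_def by simp
qed

lemma ppP: "pp \<xi> \<in> PiStar K" using inv pp_P by blast

end



context cs begin

definition tt where
  "tt \<xi> = (\<lambda>i. if pp \<xi> i \<noteq> Map.empty \<and> rr \<xi> i \<noteq> pp \<xi> i then rr \<xi> i else Map.empty)"

lemma tt_fin: "finite {i. tt \<xi> i \<noteq> Map.empty}"
proof -
  have "{i. tt \<xi> i \<noteq> Map.empty} \<subseteq> {i. rr \<xi> i \<noteq> pp \<xi> i \<and> pp \<xi> i \<noteq> Map.empty}"
    unfolding tt_def by auto
  moreover have "finite {i. rr \<xi> i \<noteq> pp \<xi> i \<and> pp \<xi> i \<noteq> Map.empty}"
    using inv[of \<xi>] unfolding pleq_def by blast
  ultimately show ?thesis by (rule finite_subset)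
qed

lemma tt_supp: "tt \<xi> i \<noteq> Map.empty \<Longrightarrow> pp \<xi> i \<noteq> Map.empty"
  unfolding tt_def by (auto split: if_splits)

lemma tt_Fn: "tt \<xi> i \<in> Fn"
  using inv[of \<xi>] unfolding tt_def PiStar_def Fn_def by auto

lemma supp_below:
  assumes "is_limit \<delta>" "pp \<delta> i \<noteq> Map.empty"
  shows "\<exists>\<eta><\<delta>. pp \<eta> i \<noteq> Map.empty"
proof (cases "p i = Map.empty")
  case False
  obtain \<eta> where "\<eta> < \<delta>" using assms(1) unfolding is_limit_def by blast
  then show ?thesis using False by (auto simp: pp_alt)
next
  case True
  then obtain \<zeta> where z: "\<zeta> < \<delta>" "rr \<zeta> i \<noteq> Map.empty"
    using assms(2) unfolding pp_alt[of \<delta>] by (auto split: if_splits)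
  then obtain \<eta> where "\<zeta> < \<eta>" "\<eta> < \<delta>" using assms(1) unfolding is_limit_def by blast
  then show ?thesis using z least_ne by (auto simp: pp_alt)
qed

lemma fin_below:
  assumes "is_limit \<delta>" "finite F"
  shows "F \<subseteq> {i. pp \<delta> i \<noteq> Map.empty} \<Longrightarrow> \<exists>\<eta><\<delta>. F \<subseteq> {i. pp \<eta> i \<noteq> Map.empty}"
  using assms(2)
proof (induction F rule: finite_induct)
  case empty
  then show ?case using assms(1) unfolding is_limit_def by blast
next
  case (insert i F)
  then obtain \<eta>1 where 1: "\<eta>1 < \<delta>" "F \<subseteq> {i. pp \<eta>1 i \<noteq> Map.empty}" by auto
  have "pp \<delta> i \<noteq> Map.empty" using insert.prems by auto
  then obtain \<eta>2 where 2: "\<eta>2 < \<delta>" "pp \<eta>2 i \<noteq> Map.empty" using supp_below[OF assms(1)] by blast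
  have "insert i F \<subseteq> {i. pp (max \<eta>1 \<eta>2) i \<noteq> Map.empty}"
    using 1 2 pp_mono[of \<eta>1 "max \<eta>1 \<eta>2"] pp_mono[of \<eta>2 "max \<eta>1 \<eta>2"] by auto
  then show ?case using 1 2 by (intro exI[of _ "max \<eta>1 \<eta>2"]) auto
qed

lemma class_unc: "\<exists>\<tau>. uncountable {\<xi>. tt \<xi> = \<tau>}"
proof (rule ccontr)
  assume "\<not> ?thesis"
  then have cl: "\<And>\<tau>. countable {\<xi>. tt \<xi> = \<tau>}" by auto
  define B where "B \<eta> = {\<xi>. {i. tt \<xi> i \<noteq> Map.empty} \<subseteq> {i. pp \<eta> i \<noteq> Map.empty}}" for \<eta>
  have cB: "countable (B \<eta>)" for \<eta>
  proof -
    define T where "T = {t::'k \<Rightarrow> nat \<rightharpoonup> bool. finite {i. t i \<noteq> Map.empty} \<and> {i. t i \<noteq> Map.empty} \<subseteq> {i. pp \<eta> i \<noteq> Map.empty} \<and> (\<forall>i. t i \<in> Fn)}"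
    have "countable {i. pp \<eta> i \<noteq> Map.empty}" using ppP[of \<eta>] unfolding PiStar_def by auto
    then have cT: "countable T" unfolding T_def by (rule count_fs[OF _ countable_Fn])
    have "B \<eta> \<subseteq> (\<Union>\<tau>\<in>T. {\<xi>. tt \<xi> = \<tau>})"
      unfolding B_def T_def using tt_fin tt_Fn by auto
    moreover have "countable (\<Union>\<tau>\<in>T. {\<xi>. tt \<xi> = \<tau>})" using cT cl by blast
    ultimately show ?thesis using countable_subset by blast
  qed
  have "\<forall>\<eta>. \<exists>b. \<forall>\<xi>\<in>B \<eta>. \<xi> < b" using om_bounded[OF om cB] by blast
  then obtain b where b: "\<And>\<eta> \<xi>. \<xi> \<in> B \<eta> \<Longrightarrow> \<xi> < b \<eta>" by metis
  have "\<forall>d. \<exists>c. \<forall>y\<in>insert d (b ` {..d}). y < c"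
  proof
    fix d :: 'w
    have "{..d} = insert d {..<d}" by auto
    then have "countable (insert d (b ` {..d}))" using countable_below by simp
    then show "\<exists>c. \<forall>y\<in>insert d (b ` {..d}). y < c" by (rule om_bounded[OF om])
  qed
  then obtain c where c: "\<And>d. d < c d" "\<And>d \<eta>. \<eta> \<le> d \<Longrightarrow> b \<eta> < c d" by (metis atMost_iff image_eqI insertCI)
  define ds where "ds n = (c ^^ n) undefined" for n
  have dsS: "ds n < ds (Suc n)" for n unfolding ds_def using c(1) by simp
  have "countable (range ds)" by simp
  then obtain z where "\<forall>y\<in>range ds. y < z" using om_bounded[OF om] by blast
  then have ex: "\<exists>z. \<forall>n. ds n < z" by auto
  define \<delta> where "\<delta> = (LEAST z. \<forall>n. ds n < z)"
  have ub: "\<forall>n. ds n < \<delta>" unfolding \<delta>_def using ex by (rule LeastI_ex)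
  have below: "\<exists>n. \<beta> \<le> ds n" if "\<beta> < \<delta>" for \<beta>
    using not_less_Least[OF that[unfolded \<delta>_def]] by (auto simp: not_less)
  have lim: "is_limit \<delta>"
    unfolding is_limit_def
  proof
    show "\<exists>\<beta>. \<beta> < \<delta>" using ub by blast
    show "\<forall>\<beta><\<delta>. \<exists>\<delta>'. \<beta> < \<delta>' \<and> \<delta>' < \<delta>"
    proof (intro allI impI)
      fix \<beta> assume "\<beta> < \<delta>"
      then obtain n where "\<beta> \<le> ds n" using below by blast
      then show "\<exists>\<delta>'. \<beta> < \<delta>' \<and> \<delta>' < \<delta>" using dsS[of n] ub
        by (intro exI[of _ "ds (Suc n)"]) auto
    qed
  qed
  have "{i. tt \<delta> i \<noteq> Map.empty} \<subseteq> {i. pp \<delta> i \<noteq> Map.empty}" using tt_supp by auto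
  then obtain \<eta> where \<eta>: "\<eta> < \<delta>" "\<delta> \<in> B \<eta>" using fin_below[OF lim tt_fin] unfolding B_def by blast
  then obtain n where n: "\<eta> \<le> ds n" using below by blast
  have "\<delta> < b \<eta>" using b \<eta> by blast
  also have "b \<eta> < c (ds n)" using c(2) n by blast
  also have "c (ds n) = ds (Suc n)" unfolding ds_def by simp
  also have "ds (Suc n) < \<delta>" using ub by blast
  finally have "\<delta> < \<delta>" .
  then show False by simp
qed

end



context cs begin

lemma main:
  assumes cs: "clubsuit_seq E x"
  shows "\<exists>q\<in>PiStar K. pleq q p \<and> (\<exists>\<gamma>\<in>E. \<forall>n\<in>x \<gamma>. forces_mem (PiStar K) pleq q (A n))"
proof -
  obtain \<tau> where unc: "uncountable {\<xi>. tt \<xi> = \<tau>}" using class_unc by blast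
  define S where "S = {\<xi>. tt \<xi> = \<tau>}"
  define al where "al \<xi> = (SOME \<alpha>. \<xi> < \<alpha> \<and> (\<exists>a\<in>A \<alpha>. pleq (rr \<xi>) a))" for \<xi>
  have al: "\<xi> < al \<xi> \<and> (\<exists>a\<in>A (al \<xi>). pleq (rr \<xi>) a)" for \<xi>
    unfolding al_def using inv[of \<xi>] by (rule_tac someI_ex) blast
  have Yunc: "uncountable (al ` S)"
  proof
    assume "countable (al ` S)"
    then obtain b where b: "\<forall>y\<in>al ` S. y < b" using om_bounded[OF om] by blast
    have "\<not> S \<subseteq> {..<b}"
    proof
      assume "S \<subseteq> {..<b}"
      then have "countable S" using countable_below[of b] by (rule countable_subset)
      then show False using unc unfolding S_def by simp
    qed
    then obtain \<xi> where "\<xi> \<in> S" "\<not> \<xi> < b" by auto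
    then have "al \<xi> < b" using b by blast
    then have "\<xi> < b" using order.strict_trans[OF conjunct1[OF al[of \<xi>]]] by blast
    then show False using \<open>\<not> \<xi> < b\<close> by blast
  qed
  then obtain \<gamma> where g: "\<gamma> \<in> E" "x \<gamma> \<subseteq> al ` S" using cs unfolding clubsuit_seq_def by blast
  have xg: "x \<gamma> \<subseteq> {..<\<gamma>}" using cs g(1) unfolding clubsuit_seq_def ladder_def by blast
  have "S \<noteq> {}" using unc unfolding S_def by (metis countable_empty)
  then obtain \<xi>0 where x0: "\<xi>0 \<in> S" by blast
  have tau: "\<tau> = tt \<xi>0" using x0 unfolding S_def by simp
  define q where "q = (\<lambda>i. if \<tau> i \<noteq> Map.empty then \<tau> i else pp \<gamma> i)"
  have r0: "rr \<xi>0 \<in> PiStar K" "pleq (rr \<xi>0) (pp \<xi>0)" using inv by blast+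
  have qP: "q \<in> PiStar K"
  proof -
    have "q i \<in> Fn" for i using tt_Fn ppP[of \<gamma>] unfolding q_def tau PiStar_def by auto
    moreover have "i \<notin> K \<Longrightarrow> q i = Map.empty" for i
      using ppP[of \<gamma>] ppP[of \<xi>0] tt_supp[of \<xi>0 i] unfolding q_def tau PiStar_def by auto
    moreover have "countable {i. q i \<noteq> Map.empty}"
    proof -
      have "{i. q i \<noteq> Map.empty} \<subseteq> {i. \<tau> i \<noteq> Map.empty} \<union> {i. pp \<gamma> i \<noteq> Map.empty}"
        unfolding q_def by auto
      moreover have "countable ({i. \<tau> i \<noteq> Map.empty} \<union> {i. pp \<gamma> i \<noteq> Map.empty})"
        using tt_fin[of \<xi>0] ppP[of \<gamma>] unfolding tau PiStar_def by (auto intro: countable_finite)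
      ultimately show ?thesis using countable_subset by blast
    qed
    ultimately show ?thesis unfolding PiStar_def by blast
  qed
  have qp: "pleq q p"
  proof -
    have "p i \<subseteq>\<^sub>m q i" for i
    proof (cases "\<tau> i = Map.empty")
      case True
      then show ?thesis using pp_le_p[of \<gamma>] unfolding q_def pleq_def by auto
    next
      case False
      then have "q i = rr \<xi>0 i" "pp \<xi>0 i \<noteq> Map.empty" "tt \<xi>0 i = rr \<xi>0 i"
        unfolding q_def tau tt_def by (auto split: if_splits)
      moreover have "p i \<subseteq>\<^sub>m pp \<xi>0 i" using pp_le_p[of \<xi>0] unfolding pleq_def by blast
      moreover have "pp \<xi>0 i \<subseteq>\<^sub>m rr \<xi>0 i" using r0(2) unfolding pleq_def by blast
      ultimately show ?thesis using map_le_trans by metis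
    qed
    moreover have "{i. q i \<noteq> p i \<and> p i \<noteq> Map.empty} \<subseteq> {i. \<tau> i \<noteq> Map.empty}"
      unfolding q_def by (auto simp: pp_alt)
    then have "finite {i. q i \<noteq> p i \<and> p i \<noteq> Map.empty}"
      using tt_fin[of \<xi>0] unfolding tau by (rule finite_subset)
    ultimately show ?thesis unfolding pleq_def by blast
  qed
  have qr: "pleq q (rr \<xi>)" if "\<xi> \<in> S" "\<xi> < \<gamma>" for \<xi>
  proof (rule pleqI)
    fix i
    have t: "tt \<xi> = \<tau>" using that unfolding S_def by simp
    show "rr \<xi> i = Map.empty \<or> q i = rr \<xi> i"
    proof (cases "\<tau> i = Map.empty")
      case False
      then show ?thesis unfolding q_def t[symmetric] tt_def by (auto split: if_splits)
    next
      case True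
      then have q: "q i = pp \<gamma> i" unfolding q_def by simp
      have tz: "tt \<xi> i = Map.empty" using True t by simp
      show ?thesis
      proof (cases "pp \<xi> i = Map.empty")
        case True
        then show ?thesis using pp_new[of \<xi> i \<gamma>] that(2) q by auto
      next
        case False
        then have "rr \<xi> i = pp \<xi> i \<or> rr \<xi> i = Map.empty" using tz unfolding tt_def by (auto split: if_splits)
        then show ?thesis using pp_mono[of \<xi> \<gamma> i] False that(2) q by auto
      qed
    qed
  qed
  have "\<forall>n\<in>x \<gamma>. forces_mem (PiStar K) pleq q (A n)"
  proof
    fix n assume n: "n \<in> x \<gamma>"
    then obtain \<xi> where xi: "\<xi> \<in> S" "n = al \<xi>" using g by blast
    have "n < \<gamma>" using n xg by auto
    then have "\<xi> < \<gamma>" using order.strict_trans[OF conjunct1[OF al[of \<xi>]]] xi(2) by blast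
    then have qr': "pleq q (rr \<xi>)" using qr xi by blast
    obtain a where a: "a \<in> A n" "pleq (rr \<xi>) a" using al[of \<xi>] xi by blast
    show "forces_mem (PiStar K) pleq q (A n)"
      unfolding forces_mem_def
    proof (intro ballI impI)
      fix r assume "r \<in> PiStar K" "pleq r q"
      have "pleq r a" using pleq_trans[OF \<open>pleq r q\<close> pleq_trans[OF qr' a(2)]] .
      then show "\<exists>s\<in>PiStar K. pleq s r \<and> (\<exists>a\<in>A n. pleq s a)"
        using a(1) \<open>r \<in> PiStar K\<close> pleq_refl[of r] by blast
    qed
  qed
  then show ?thesis using qP qp g(1) by blast
qed

end

theorem lemma3p7:
  fixes E :: "'w::wellorder set" and x :: "'w \<Rightarrow> 'w set" and K :: "'k set"
  assumes "is_omega1 TYPE('w)"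
    and "\<forall>\<gamma>\<in>E. is_limit \<gamma>"
    and "stationary E"
    and "clubsuit_seq E x"
  shows "forces_clubsuit_guess (PiStar K) pleq E x"
  unfolding forces_clubsuit_guess_def
proof (intro ballI allI impI)
  fix p A assume p: "p \<in> PiStar K" and h: "(\<forall>\<alpha>. A \<alpha> \<subseteq> PiStar K) \<and> forces_unbounded (PiStar K) pleq p (A :: 'w \<Rightarrow> _)"
  interpret cs K p A using assms(1) p h by unfold_locales auto
  show "\<exists>q\<in>PiStar K. pleq q p \<and> (\<exists>\<gamma>\<in>E. \<forall>n\<in>x \<gamma>. forces_mem (PiStar K) pleq q (A n))"
    by (rule main[OF assms(4)])
qed


end
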